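(* Let $e_1,\dots,e_k\in\mathbb{C}^{n\times n}$ be an anticommuting family, $n\ge1$. (i) If $\mathrm{rk}(e_i^2)=\mathrm{rk}(e_i^3)$ for every $i\in[k]$ (which holds in particular if every $e_i^2$ is diagonalisable), then $\sum_{i=1}^k\mathrm{rk}(e_i^2)\le (2\log_2 n+1)n$. (ii) If every $e_i$ is diagonalisable, then $\sum_{i=1}^k\mathrm{rk}(e_i)\le(2\log_2 n+1)n$.
   Context: A family $e_1,\dots,e_k$ of complex $n\times n$ matrices is called anticommuting if $e_ie_j=-e_je_i$ for all distinct $i,j\in[k]=\{1,\dots,k\}$. $\mathrm{rk}$ denotes matrix rank. *)

theory Defs
  imports "HOL-Analysis.Analysis"
begin

definition diagonalizable :: "'a::field^'n^'n \<Rightarrow> bool" where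
  "diagonalizable A \<longleftrightarrow>
     (\<exists>(P::'a^'n^'n) (D::'a^'n^'n). invertible P \<and> (\<forall>i j. i \<noteq> j \<longrightarrow> D $ i $ j = 0) \<and> A = P ** D ** matrix_inv P)"

definition anticommuting :: "nat \<Rightarrow> (nat \<Rightarrow> 'a::ring_1^'n^'n) \<Rightarrow> bool" where
  "anticommuting k e \<longleftrightarrow>
     (\<forall>i\<in>{1..k}. \<forall>j\<in>{1..k}. i \<noteq> j \<longrightarrow> e i ** e j = - (e j ** e i))"

end

theory Submission imports Defs "HOL-Computational_Algebra.Fundamental_Theorem_Algebra" begin

abbreviation lin :: "(complex^'n \<Rightarrow> complex^'n) \<Rightarrow> bool" where
  "lin f \<equiv> Vector_Spaces.linear (*s) (*s) f"

lemma lin_funpow: "lin u \<Longrightarrow> lin (u ^^ i)"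
proof (induction i)
  case 0 then show ?case by (simp add: vec.linear_id id_def[symmetric])
next
  case (Suc i) then show ?case
    using Vector_Spaces.linear_compose[of "(*s)" "(*s)" "u^^i" "(*s)" u] by (simp add: o_def)
qed

definition peval :: "(complex^'n \<Rightarrow> complex^'n) \<Rightarrow> complex poly \<Rightarrow> complex^'n \<Rightarrow> complex^'n" where
  "peval u p x = (\<Sum>i\<le>degree p. coeff p i *s (u^^i) x)"

lemma peval_N: "degree p \<le> N \<Longrightarrow> peval u p x = (\<Sum>i\<le>N. coeff p i *s (u^^i) x)"
  unfolding peval_def
  by (rule sum.mono_neutral_left) (auto simp: coeff_eq_0)

lemma peval_lin_factor:
  assumes "lin u"
  shows "peval u ([:-r,1:] * q) x = peval u q (u x - r *s x)"
proof -
  let ?N = "Suc (degree q)"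
  let ?S1 = "(\<Sum>i\<le>degree q. coeff q i *s (u^^i) (u x))"
  let ?S2 = "(\<Sum>i\<le>degree q. (r * coeff q i) *s (u^^i) x)"
  have d: "degree ([:-r,1:] * q) \<le> ?N"
    by (metis degree_mult_le degree_pCons_eq_if One_nat_def add.commute le_SucI
        degree_linear_power power_one_right plus_1_eq_Suc)
  have e: "[:-r,1:] * q = smult (-r) q + pCons 0 q" by simp
  have "peval u ([:-r,1:] * q) x = (\<Sum>i\<le>?N. (-r * coeff q i + coeff (pCons 0 q) i) *s (u^^i) x)"
    using peval_N[OF d] e by simp
  also have "\<dots> = (\<Sum>i\<le>?N. (-r * coeff q i) *s (u^^i) x) + (\<Sum>i\<le>?N. coeff (pCons 0 q) i *s (u^^i) x)"
    by (simp only: vec.scale_left_distrib sum.distrib)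
  also have "(\<Sum>i\<le>?N. coeff (pCons 0 q) i *s (u^^i) x) = ?S1"
    by (subst sum.atMost_Suc_shift) (simp add: funpow_swap1)
  also have "(\<Sum>i\<le>?N. (-r * coeff q i) *s (u^^i) x) = (\<Sum>i\<le>degree q. (-r * coeff q i) *s (u^^i) x)"
    by (rule sum.mono_neutral_right) (auto simp: coeff_eq_0)
  also have "\<dots> = - ?S2"
    by (simp add: sum_negf)
  finally have L: "peval u ([:-r,1:] * q) x = - ?S2 + ?S1" .
  have "peval u q (u x - r *s x) = (\<Sum>i\<le>degree q. coeff q i *s ((u^^i) (u x) - r *s (u^^i) x))"
    unfolding peval_def using lin_funpow[OF assms]
    by (simp add: vec.linear_diff vec.linear_scale)
  also have "\<dots> = ?S1 - ?S2"
    by (simp add: vec.scale_right_diff_distrib sum_subtractf vec.scale_scale mult.commute)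
  finally show ?thesis using L by simp
qed

lemma eigen_poly:
  assumes lu: "lin u" and inv: "\<forall>x\<in>W. u x \<in> W" and sW: "vec.subspace W"
  shows "p \<noteq> 0 \<Longrightarrow> x \<in> W \<Longrightarrow> x \<noteq> 0 \<Longrightarrow> peval u p x = 0 \<Longrightarrow> \<exists>v\<in>W. v \<noteq> 0 \<and> (\<exists>c. u v = c *s v)"
proof (induction "degree p" arbitrary: p x rule: less_induct)
  case less
  show ?case
  proof (cases "degree p = 0")
    case True
    then have "peval u p x = coeff p 0 *s x" by (simp add: peval_def)
    moreover have "coeff p 0 \<noteq> 0" using True less.prems(1) leading_coeff_0_iff by fastforce
    ultimately show ?thesis using less.prems by (simp add: vec.scale_eq_0_iff)
  next
    case False
    then have "\<not> constant (poly p)" by (simp add: constant_degree)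
    then obtain r where "poly p r = 0"
      using fundamental_theorem_of_algebra by blast
    then obtain q where pq: "p = [:-r,1:] * q" using poly_eq_0_iff_dvd by (metis dvdE)
    with less.prems have q0: "q \<noteq> 0" by auto
    have "degree p = degree [:-r,1:] + degree q"
      unfolding pq by (rule degree_mult_eq) (use q0 in auto)
    then have dq: "degree q < degree p" by simp
    show ?thesis
    proof (cases "u x - r *s x = 0")
      case True
      then show ?thesis using less.prems by (intro bexI[of _ x]) auto
    next
      case False
      have yW: "u x - r *s x \<in> W"
        using sW inv less.prems(2) by (simp add: vec.subspace_diff vec.subspace_scale)
      have "peval u q (u x - r *s x) = 0"
        using less.prems(4) pq peval_lin_factor[OF lu] by simp
      then show ?thesis using less.hyps[OF dq q0 yW False] by blast
    qed
  qed
qed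

lemma funpow_in: "\<forall>x\<in>W. u x \<in> W \<Longrightarrow> w \<in> W \<Longrightarrow> (u^^i) w \<in> W"
  by (induction i) auto

lemma eigen_exists:
  assumes lu: "lin u" and sW: "vec.subspace W" and inv: "\<forall>x\<in>W. u x \<in> W"
    and wW: "w \<in> W" and w0: "w \<noteq> 0"
  shows "\<exists>v\<in>W. v \<noteq> 0 \<and> (\<exists>c. u v = c *s v)"
proof -
  define d where "d = vec.dim W"
  define g where "g i = (u^^i) w" for i
  have gW: "g i \<in> W" for i unfolding g_def using funpow_in[OF inv wW] .
  have "\<exists>p. p \<noteq> 0 \<and> peval u p w = 0"
  proof (cases "inj_on g {..d}")
    case True
    define T where "T = g ` {..d}"
    have cT: "card T = Suc d" unfolding T_def using True by (simp add: card_image)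
    have "\<not> vec.independent T"
    proof
      assume "vec.independent T"
      then have "card T \<le> vec.dim W" using gW vec.independent_card_le_dim[of T W] unfolding T_def by auto
      then show False using cT d_def by simp
    qed
    then obtain c where c1: "\<exists>v\<in>T. c v \<noteq> 0" and c2: "(\<Sum>v\<in>T. c v *s v) = 0"
      using vec.dependent_finite[of T] unfolding T_def by auto
    define p where "p = (\<Sum>i\<le>d. monom (c (g i)) i)"
    have cp: "coeff p j = (if j \<le> d then c (g j) else 0)" for j
      unfolding p_def by (simp add: coeff_sum coeff_monom)
    have dp: "degree p \<le> d" by (rule degree_le) (simp add: cp)
    obtain j where "j \<le> d" "c (g j) \<noteq> 0" using c1 unfolding T_def by auto
    then have "p \<noteq> 0" using cp[of j] by auto
    moreover have "peval u p w = 0"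
    proof -
      have "peval u p w = (\<Sum>i\<le>d. c (g i) *s g i)"
        using peval_N[OF dp] cp by (simp add: g_def)
      also have "\<dots> = (\<Sum>v\<in>T. c v *s v)"
        unfolding T_def using True by (simp add: sum.reindex)
      finally show ?thesis using c2 by simp
    qed
    ultimately show ?thesis by blast
  next
    case False
    then obtain i j where ij: "i < j" "j \<le> d" "g i = g j"
      unfolding inj_on_def by (metis atMost_iff linorder_neqE_nat order.strict_trans1 order.strict_implies_order)
    define p :: "complex poly" where "p = monom 1 j - monom 1 i"
    have cp: "coeff p l = (if l = j then 1 else 0) - (if l = i then 1 else 0)" for l
      unfolding p_def by (simp add: coeff_monom)
    have dp: "degree p \<le> j" by (rule degree_le) (use ij in \<open>simp add: cp\<close>)
    have "p \<noteq> 0" using cp[of j] ij by auto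
    moreover have "peval u p w = 0"
    proof -
      have "peval u p w = (\<Sum>l\<le>j. ((if l = j then 1 else 0) - (if l = i then 1 else 0)) *s g l)"
        using peval_N[OF dp] cp by (simp add: g_def)
      also have "\<dots> = (\<Sum>l\<le>j. (if l = j then g l else 0) - (if l = i then g l else 0))"
        by (rule sum.cong) (use ij in auto)
      also have "\<dots> = (\<Sum>l\<le>j. (if l = j then g l else 0)) - (\<Sum>l\<le>j. (if l = i then g l else 0))"
        by (simp only: sum_subtractf)
      also have "\<dots> = 0" using ij by simp
      finally show ?thesis .
    qed
    ultimately show ?thesis by blast
  qed
  then obtain p where "p \<noteq> 0" "peval u p w = 0" by blast
  then show ?thesis using eigen_poly[OF lu inv sW] wW w0 by blast
qed

lemma dim_image_inj:
  assumes lf: "lin f" and sW: "vec.subspace W" and eq: "vec.dim (f ` W) = vec.dim W"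
  shows "inj_on f W"
proof -
  obtain B where B: "B \<subseteq> W" "vec.independent B" "W \<subseteq> vec.span B" "card B = vec.dim W"
    using vec.basis_exists[of W] by blast
  have fB: "finite B" using B(2) vec.finiteI_independent by blast
  have sp: "f ` W \<subseteq> vec.span (f ` B)" using vec.linear_spans_image[OF lf B(3)] .
  have "vec.dim (f ` W) \<le> card (f ` B)" using vec.dim_le_card[OF sp] fB by simp
  then have c1: "card (f ` B) = card B" using card_image_le[OF fB, of f] eq B(4) by simp
  then have ib: "inj_on f B" using inj_on_iff_eq_card[OF fB, of f] by simp
  have "vec.independent (f ` B)"
    by (rule vec.card_le_dim_spanning[OF _ sp]) (use B(1) fB c1 eq B(4) in auto)
  then have "inj_on f (vec.span B)" using vec.linear_inj_on_span_independent_image[OF lf _ ib] by blast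
  then show ?thesis using B(3) inj_on_subset by blast
qed

lemma log2_half:
  assumes "1 \<le> e" "2 * e \<le> d"
  shows "log 2 (real e) \<le> log 2 (real d) - 1"
proof -
  have "log 2 (real e) \<le> log 2 (real d / 2)"
    using assms by (subst log_le_cancel_iff) auto
  also have "\<dots> = log 2 (real d) - 1" using assms by (simp add: log_divide)
  finally show ?thesis .
qed

lemma clifford:
  fixes f :: "nat \<Rightarrow> complex^'n \<Rightarrow> complex^'n"
  assumes "vec.subspace W" "1 \<le> vec.dim W" "finite S"
    "\<forall>i\<in>S. lin (f i)" "\<forall>i\<in>S. \<forall>x\<in>W. f i x \<in> W" "\<forall>i\<in>S. inj_on (f i) W"
    "\<forall>i\<in>S. \<forall>j\<in>S. i \<noteq> j \<longrightarrow> (\<forall>x. f i (f j x) = - f j (f i x))"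
  shows "real (card S) \<le> 2 * log 2 (real (vec.dim W)) + 1"
  using assms
proof (induction "vec.dim W" arbitrary: W f S rule: less_induct)
  case less
  note sW = less.prems(1) and dW = less.prems(2) and fS = less.prems(3)
    and lf = less.prems(4) and fW = less.prems(5) and fi = less.prems(6) and ac = less.prems(7)
  have acI: "f i (f j x) = - f j (f i x)" if "i \<in> S" "j \<in> S" "i \<noteq> j" for i j x
    using ac that by blast
  have lg0: "0 \<le> log 2 (real (vec.dim W))" using dW by simp
  show ?case
  proof (cases "card S \<le> 1")
    case True then show ?thesis using lg0 by simp
  next
    case False
    then have "S \<noteq> {}" by auto
    then obtain a where a: "a \<in> S" by blast
    have "card (S - {a}) \<noteq> 0" using False a fS by simp
    then obtain b where "b \<in> S - {a}" by (metis all_not_in_conv card.empty)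
    then have ab: "a \<in> S" "b \<in> S" "a \<noteq> b" using a by auto
    define u where "u x = f a (f b x)" for x
    have lu: "lin u"
      using Vector_Spaces.linear_compose[OF lf[rule_format, OF ab(2)] lf[rule_format, OF ab(1)]]
      unfolding u_def by (simp add: o_def)
    have uW: "\<forall>x\<in>W. u x \<in> W" using fW ab unfolding u_def by auto
    have ui: "inj_on u W"
      using fi ab fW unfolding u_def inj_on_def by blast
    have comm: "u (f j x) = f j (u x)" if "j \<in> S" "j \<noteq> a" "j \<noteq> b" for j x
    proof -
      have "u (f j x) = f a (- f j (f b x))" unfolding u_def using acI[of b j x] ab that by simp
      also have "\<dots> = - f a (f j (f b x))" using vec.linear_neg lf ab by blast
      also have "\<dots> = f j (u x)" unfolding u_def using acI[of a j "f b x"] ab that by simp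
      finally show ?thesis .
    qed
    have au: "u (f a x) = - f a (u x)" for x
    proof -
      have "u (f a x) = f a (- f a (f b x))" unfolding u_def using acI[of b a x] ab by simp
      also have "\<dots> = - f a (u x)" unfolding u_def using vec.linear_neg lf ab by blast
      finally show ?thesis .
    qed
    have "\<not> W \<subseteq> {0}" using dW vec.dim_eq_0[of W] by linarith
    then obtain w where w: "w \<in> W" "w \<noteq> 0" by blast
    obtain v c where v: "v \<in> W" "v \<noteq> 0" "u v = c *s v"
      using eigen_exists[OF lu sW uW w] by blast
    have c0: "c \<noteq> 0"
    proof
      assume "c = 0"
      then have "u v = u 0" using v vec.linear_0[OF lu] by simp
      then show False using ui v vec.subspace_0[OF sW] unfolding inj_on_def by blast
    qed
    define E where "E = {x\<in>W. u x = c *s x}"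
    define E' where "E' = {x\<in>W. u x = (-c) *s x}"
    have sE: "vec.subspace {x\<in>W. u x = k *s x}" for k
      using sW unfolding vec.subspace_def
      by (auto simp: vec.linear_add[OF lu] vec.linear_scale[OF lu] vec.linear_0[OF lu]
          vec.scale_right_distrib vec.scale_left_commute)
    have EW: "E \<subseteq> W" "E' \<subseteq> W" unfolding E_def E'_def by auto
    have aE: "f a ` E \<subseteq> E'"
      unfolding E_def E'_def using fW ab au vec.linear_scale[OF lf[rule_format, OF ab(1)]]
      by auto
    have "vec.dim (f a ` E) = vec.dim E"
    proof (rule vec.dim_image_eq)
      show "lin (f a)" using lf ab by auto
      show "inj_on (f a) (vec.span E)"
        using sE[of c] fi ab EW inj_on_subset unfolding E_def by (metis vec.span_eq_iff)
    qed
    then have dEE: "vec.dim E \<le> vec.dim E'" using vec.dim_subset[OF aE] by simp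
    have EE0: "E \<inter> E' \<subseteq> {0}"
    proof
      fix x assume "x \<in> E \<inter> E'"
      then have "c *s x = (-c) *s x" unfolding E_def E'_def by auto
      then have h: "(c - (-c)) *s x = 0" by (simp only: vec.scale_left_diff_distrib diff_self)
      have "c - (-c) \<noteq> 0" using c0 by simp
      then show "x \<in> {0}" using h vec.scale_eq_0_iff by blast
    qed
    have "vec.dim {x + y |x y. x \<in> E \<and> y \<in> E'} + vec.dim (E \<inter> E') = vec.dim E + vec.dim E'"
      using vec.dim_sums_Int[OF sE[of c] sE[of "-c"]] unfolding E_def E'_def by simp
    moreover have "vec.dim (E \<inter> E') = 0" using EE0 vec.dim_eq_0 by blast
    moreover have "vec.dim {x + y |x y. x \<in> E \<and> y \<in> E'} \<le> vec.dim W"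
      by (rule vec.dim_subset) (use EW vec.subspace_add[OF sW] in blast)
    ultimately have d2: "2 * vec.dim E \<le> vec.dim W" using dEE by simp
    have d1: "1 \<le> vec.dim E"
    proof -
      have "v \<in> E" unfolding E_def using v by auto
      then have "\<not> E \<subseteq> {0}" using v by auto
      then show ?thesis using vec.dim_eq_0[of E] by linarith
    qed
    define g where "g j x = u (f j x)" for j x
    define S' where "S' = S - {a, b}"
    have IH: "real (card S') \<le> 2 * log 2 (real (vec.dim E)) + 1"
    proof (rule less.hyps[of E S' g])
      show "vec.dim E < vec.dim W" using d1 d2 by linarith
      show "vec.subspace E" using sE unfolding E_def .
      show "1 \<le> vec.dim E" by (fact d1)
      show "finite S'" using fS unfolding S'_def by simp
      show "\<forall>i\<in>S'. lin (g i)"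
      proof
        fix i assume "i \<in> S'"
        then show "lin (g i)"
          using Vector_Spaces.linear_compose[OF lf[rule_format, of i] lu] unfolding g_def S'_def
          by (simp add: o_def)
      qed
      show "\<forall>i\<in>S'. \<forall>x\<in>E. g i x \<in> E"
      proof (intro ballI)
        fix i x assume i: "i \<in> S'" and x: "x \<in> E"
        have "g i x \<in> W" unfolding g_def using x EW fW uW i S'_def by auto
        moreover have "u (g i x) = c *s g i x"
          using x i comm unfolding g_def E_def S'_def
          by (auto simp: vec.linear_scale[OF lf[rule_format]] vec.linear_scale[OF lu])
        ultimately show "g i x \<in> E" unfolding E_def by simp
      qed
      show "\<forall>i\<in>S'. inj_on (g i) E"
      proof
        fix i assume i: "i \<in> S'"
        have "inj_on (g i) W"
          using i fi ui fW unfolding g_def S'_def inj_on_def by blast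
        then show "inj_on (g i) E" using EW inj_on_subset by blast
      qed
      show "\<forall>i\<in>S'. \<forall>j\<in>S'. i \<noteq> j \<longrightarrow> (\<forall>x. g i (g j x) = - g j (g i x))"
      proof (intro ballI impI allI)
        fix i j x assume i: "i \<in> S'" and j: "j \<in> S'" and ij: "i \<noteq> j"
        have "g i (g j x) = u (u (f i (f j x)))"
          unfolding g_def using comm i S'_def by auto
        also have "\<dots> = - u (u (f j (f i x)))"
          using acI[of i j x] i j ij vec.linear_neg[OF lu] unfolding S'_def by simp
        also have "u (u (f j (f i x))) = g j (g i x)"
          unfolding g_def using comm j S'_def by auto
        finally show "g i (g j x) = - g j (g i x)" .
      qed
    qed
    have cS: "card S = card S' + 2"
    proof -
      have "card S' = card S - card {a, b}" unfolding S'_def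
        by (rule card_Diff_subset) (use ab in auto)
      moreover have "card {a, b} = 2" using ab by simp
      moreover have "card {a,b} \<le> card S" using ab fS by (intro card_mono) auto
      ultimately show ?thesis by simp
    qed
    have "log 2 (real (vec.dim E)) \<le> log 2 (real (vec.dim W)) - 1"
      using log2_half d1 d2 by blast
    then show ?thesis using IH cS by simp
  qed
qed

definition G :: "nat \<Rightarrow> real" where "G d = (2 * log 2 (real d) + 1) * real d"

lemma G_le: "x \<le> c \<Longrightarrow> G x \<le> (2 * log 2 (real c) + 1) * real x"
proof (cases "x = 0")
  case False
  assume "x \<le> c"
  then have "log 2 (real x) \<le> log 2 (real c)" using False by (subst log_le_cancel_iff) auto
  then show ?thesis unfolding G_def by (intro mult_right_mono) auto
qed (simp add: G_def)

lemma G_super: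
  assumes "a + b \<le> c" shows "G a + G b \<le> G c"
proof (cases "c = 0")
  case True then show ?thesis using assms by (simp add: G_def)
next
  case False
  then have l: "0 \<le> 2 * log 2 (real c) + 1" by simp
  have "G a + G b \<le> (2 * log 2 (real c) + 1) * real a + (2 * log 2 (real c) + 1) * real b"
    using G_le[of a c] G_le[of b c] assms by simp
  also have "\<dots> = (2 * log 2 (real c) + 1) * real (a + b)" by (simp add: algebra_simps)
  also have "\<dots> \<le> (2 * log 2 (real c) + 1) * real c"
    using l assms by (intro mult_left_mono) auto
  finally show ?thesis unfolding G_def .
qed

lemma core:
  fixes f :: "nat \<Rightarrow> complex^'n \<Rightarrow> complex^'n" and I :: "nat set"
  assumes fI: "finite I" and lf: "\<forall>i\<in>I. lin (f i)"
    and ac: "\<forall>i\<in>I. \<forall>j\<in>I. i \<noteq> j \<longrightarrow> (\<forall>x. f i (f j x) = - f j (f i x))"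
    and fit: "\<forall>i\<in>I. \<forall>x. f i (f i (f i x)) = 0 \<longrightarrow> f i (f i x) = 0"
  shows "vec.subspace W \<Longrightarrow> (\<forall>i\<in>I. \<forall>x\<in>W. f i x \<in> W) \<Longrightarrow>
     (\<Sum>i\<in>I. real (vec.dim ((\<lambda>x. f i (f i x)) ` W))) \<le> G (vec.dim W)"
proof (induction "vec.dim W" arbitrary: W rule: less_induct)
  case less
  note sW = less.prems(1) and fW = less.prems(2)
  define h where "h = (\<lambda>i x. f i (f i x))"
  have acI: "f i (f j x) = - f j (f i x)" if "i \<in> I" "j \<in> I" "i \<noteq> j" for i j x
    using ac that by blast
  have lh: "lin (h i)" if "i \<in> I" for i
    using Vector_Spaces.linear_compose[OF lf[rule_format, OF that] lf[rule_format, OF that]]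
    unfolding h_def by (simp add: o_def)
  have hcomm: "h i (f j x) = f j (h i x)" if "i \<in> I" "j \<in> I" for i j x
  proof (cases "i = j")
    case False
    have "h i (f j x) = f i (- f j (f i x))" unfolding h_def using acI[of i j x] that False by simp
    also have "\<dots> = - f i (f j (f i x))" using vec.linear_neg lf that by blast
    also have "\<dots> = f j (h i x)" unfolding h_def using acI[of i j "f i x"] that False by simp
    finally show ?thesis .
  qed (simp add: h_def)
  have hW: "h i x \<in> W" if "i \<in> I" "x \<in> W" for i x using fW that unfolding h_def by auto
  have IHh: "(\<Sum>j\<in>I. real (vec.dim (h j ` U))) \<le> G (vec.dim U)"
    if "vec.dim U < vec.dim W" "vec.subspace U" "\<forall>i\<in>I. \<forall>x\<in>U. f i x \<in> U" for U
    using less.hyps[OF that] unfolding h_def by simp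
  have "(\<Sum>i\<in>I. real (vec.dim (h i ` W))) \<le> G (vec.dim W)"
  proof (cases "\<exists>i\<in>I. 0 < vec.dim (h i ` W) \<and> vec.dim (h i ` W) < vec.dim W")
    case True
    then obtain i where i: "i \<in> I" "0 < vec.dim (h i ` W)" "vec.dim (h i ` W) < vec.dim W" by blast
    define A where "A = h i ` W"
    define B where "B = {x\<in>W. h i x = 0}"
    have sA: "vec.subspace A" unfolding A_def using vec.linear_subspace_image[OF lh[OF i(1)] sW] .
    have "B = W \<inter> {x. h i x = 0}" unfolding B_def by auto
    then have sB: "vec.subspace B"
      using vec.subspace_inter[OF sW vec.linear_subspace_kernel[OF lh[OF i(1)]]] by simp
    have AW: "A \<subseteq> W" unfolding A_def using hW i by auto
    have BW: "B \<subseteq> W" unfolding B_def by auto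
    have invA: "\<forall>j\<in>I. \<forall>x\<in>A. f j x \<in> A"
    proof (intro ballI)
      fix j x assume j: "j \<in> I" and "x \<in> A"
      then obtain w where w: "w \<in> W" "x = h i w" unfolding A_def by auto
      then have "f j x = h i (f j w)" using hcomm[OF i(1) j] by simp
      moreover have "f j w \<in> W" using fW j w by auto
      ultimately show "f j x \<in> A" unfolding A_def by auto
    qed
    have invB: "\<forall>j\<in>I. \<forall>x\<in>B. f j x \<in> B"
      unfolding B_def using hcomm[OF i(1)] fW vec.linear_0[OF lf[rule_format]] by auto
    have AB0: "A \<inter> B \<subseteq> {0}"
    proof
      fix x assume "x \<in> A \<inter> B"
      then obtain w where w: "x = h i w" "h i x = 0" unfolding A_def B_def by auto
      then have "f i (f i (f i (f i w))) = 0" unfolding h_def by simp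
      then have "f i (f i (f i w)) = 0" using fit i(1) by blast
      then have "f i (f i w) = 0" using fit i(1) by blast
      then show "x \<in> {0}" using w unfolding h_def by simp
    qed
    have hAi: "inj_on (h i) A"
    proof (rule inj_onI)
      fix x y assume xy: "x \<in> A" "y \<in> A" "h i x = h i y"
      then have "h i (x - y) = 0" using vec.linear_diff[OF lh[OF i(1)]] by simp
      moreover have "x - y \<in> A" using xy sA vec.subspace_diff by blast
      ultimately have "x - y \<in> A \<inter> B" unfolding B_def using AW by auto
      then show "x = y" using AB0 by auto
    qed
    have hAA: "h i ` A = A"
    proof (rule vec.subspace_dim_equal)
      show "vec.subspace (h i ` A)" using vec.linear_subspace_image[OF lh[OF i(1)] sA] .
      show "h i ` A \<subseteq> A" unfolding A_def using hW i by auto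
      have "vec.dim (h i ` A) = vec.dim A"
        by (rule vec.dim_image_eq[OF lh[OF i(1)]]) (use hAi sA vec.span_eq_iff in metis)
      then show "vec.dim A \<le> vec.dim (h i ` A)" by simp
    qed (fact sA)
    have WAB: "\<exists>a\<in>A. \<exists>b\<in>B. w = a + b" if "w \<in> W" for w
    proof -
      have "h i w \<in> h i ` A" using hAA that unfolding A_def by auto
      then obtain a where a: "a \<in> A" "h i w = h i a" by auto
      have "h i (w - a) = 0" using a vec.linear_diff[OF lh[OF i(1)]] by simp
      moreover have "w - a \<in> W" using that a AW sW vec.subspace_diff by blast
      ultimately have "w - a \<in> B" unfolding B_def by simp
      then show ?thesis using a by (intro bexI[of _ a] bexI[of _ "w - a"]) auto
    qed
    have dAB: "vec.dim A + vec.dim B \<le> vec.dim W"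
    proof -
      have "vec.dim {x + y |x y. x \<in> A \<and> y \<in> B} + vec.dim (A \<inter> B) = vec.dim A + vec.dim B"
        using vec.dim_sums_Int[OF sA sB] .
      moreover have "vec.dim (A \<inter> B) = 0" using AB0 vec.dim_eq_0 by blast
      moreover have "vec.dim {x + y |x y. x \<in> A \<and> y \<in> B} \<le> vec.dim W"
        by (rule vec.dim_subset) (use AW BW vec.subspace_add[OF sW] in blast)
      ultimately show ?thesis by simp
    qed
    have split: "vec.dim (h j ` W) \<le> vec.dim (h j ` A) + vec.dim (h j ` B)" if j: "j \<in> I" for j
    proof -
      have s1: "vec.subspace (h j ` A)" using vec.linear_subspace_image[OF lh[OF j] sA] .
      have s2: "vec.subspace (h j ` B)" using vec.linear_subspace_image[OF lh[OF j] sB] .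
      have "h j ` W \<subseteq> {x + y |x y. x \<in> h j ` A \<and> y \<in> h j ` B}"
      proof
        fix z assume "z \<in> h j ` W"
        then obtain w where w: "w \<in> W" "z = h j w" by auto
        then obtain a b where "a \<in> A" "b \<in> B" "w = a + b" using WAB by blast
        then show "z \<in> {x + y |x y. x \<in> h j ` A \<and> y \<in> h j ` B}"
          using w vec.linear_add[OF lh[OF j]] by blast
      qed
      then have "vec.dim (h j ` W) \<le> vec.dim {x + y |x y. x \<in> h j ` A \<and> y \<in> h j ` B}"
        by (rule vec.dim_subset)
      also have "\<dots> \<le> vec.dim (h j ` A) + vec.dim (h j ` B)"
        using vec.dim_sums_Int[OF s1 s2] by linarith
      finally show ?thesis .
    qed
    have dA: "vec.dim A < vec.dim W" using i(3) unfolding A_def .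
    have dB: "vec.dim B < vec.dim W" using i(2) dAB unfolding A_def by linarith
    have "(\<Sum>j\<in>I. real (vec.dim (h j ` W))) \<le> (\<Sum>j\<in>I. real (vec.dim (h j ` A)) + real (vec.dim (h j ` B)))"
      by (rule sum_mono) (use split in force)
    also have "\<dots> = (\<Sum>j\<in>I. real (vec.dim (h j ` A))) + (\<Sum>j\<in>I. real (vec.dim (h j ` B)))"
      by (rule sum.distrib)
    also have "\<dots> \<le> G (vec.dim A) + G (vec.dim B)"
      using IHh[OF dA sA invA] IHh[OF dB sB invB] by linarith
    also have "\<dots> \<le> G (vec.dim W)" using G_super[OF dAB] .
    finally show ?thesis .
  next
    case False
    have dle: "vec.dim (h i ` W) \<le> vec.dim W" if "i \<in> I" for i
      using vec.dim_image_le[OF lh[OF that]] .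
    show ?thesis
    proof (cases "vec.dim W = 0")
      case True
      then have "\<forall>i\<in>I. vec.dim (h i ` W) = 0" using dle by (metis le_zero_eq)
      then have z: "(\<Sum>i\<in>I. real (vec.dim (h i ` W))) = 0"
        by (intro sum.neutral) (simp del: vec.dim_eq_0)
      show ?thesis unfolding z G_def True by simp
    next
      case d0: False
      define S where "S = {i\<in>I. vec.dim (h i ` W) = vec.dim W}"
      have terms: "real (vec.dim (h i ` W)) = (if i \<in> S then real (vec.dim W) else 0)" if "i \<in> I" for i
        using False dle[OF that] that unfolding S_def by force
      have "(\<Sum>i\<in>I. real (vec.dim (h i ` W))) = (\<Sum>i\<in>I. (if i \<in> S then real (vec.dim W) else 0))"
        by (rule sum.cong) (use terms in auto)
      also have "\<dots> = real (card S) * real (vec.dim W)"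
        using fI by (simp add: sum.If_cases S_def Int_def)
      also have "\<dots> \<le> (2 * log 2 (real (vec.dim W)) + 1) * real (vec.dim W)"
      proof (rule mult_right_mono)
        show "real (card S) \<le> 2 * log 2 (real (vec.dim W)) + 1"
        proof (rule clifford[of W S f])
          show "vec.subspace W" by (fact sW)
          show "1 \<le> vec.dim W" using d0 by linarith
          show "finite S" using fI unfolding S_def by simp
          show "\<forall>i\<in>S. lin (f i)" using lf unfolding S_def by simp
          show "\<forall>i\<in>S. \<forall>x\<in>W. f i x \<in> W" using fW unfolding S_def by simp
          show "\<forall>i\<in>S. \<forall>j\<in>S. i \<noteq> j \<longrightarrow> (\<forall>x. f i (f j x) = - f j (f i x))"
            using ac unfolding S_def by blast
          show "\<forall>i\<in>S. inj_on (f i) W"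
          proof
            fix i assume iS: "i \<in> S"
            then have iI: "i \<in> I" unfolding S_def by simp
            have "vec.dim (h i ` W) \<le> vec.dim (f i ` W)"
              unfolding h_def using vec.dim_image_le[OF lf[rule_format, OF iI], of "f i ` W"]
              by (simp add: image_image)
            moreover have "vec.dim (f i ` W) \<le> vec.dim W" using vec.dim_image_le lf iI by blast
            ultimately have "vec.dim (f i ` W) = vec.dim W" using iS unfolding S_def by simp
            then show "inj_on (f i) W" using dim_image_inj lf iI sW by blast
          qed
        qed
      qed simp
      finally show ?thesis unfolding G_def .
    qed
  qed
  then show ?case unfolding h_def .
qed

lemma lin_vm: "lin (\<lambda>x. x v* (A::complex^'n^'n))"
proof -
  have "(\<lambda>x. x v* A) = (*v) (transpose A)" by (simp add: fun_eq_iff)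
  then show ?thesis by simp
qed

lemma sub_vm: "vec.subspace S \<Longrightarrow> vec.subspace ((\<lambda>x. x v* (A::complex^'n^'n)) ` S)"
  using vec.linear_subspace_image[OF lin_vm] .

lemma rank_range: "rank (A::complex^'n^'n) = vec.dim (range (\<lambda>x. x v* A))"
proof -
  let ?B = "transpose A"
  have r: "rank A = vec.dim (columns ?B)" unfolding row_rank_def_gen columns_transpose ..
  have c: "column i ?B = ?B *v axis i 1" for i
    by (simp add: vec_eq_iff matrix_vector_mult_def axis_def column_def
        if_distrib cong: if_cong)
  have s1: "columns ?B \<subseteq> range ((*v) ?B)" unfolding columns_def using c by auto
  have s2: "range ((*v) ?B) \<subseteq> vec.span (columns ?B)"
    using matrix_vector_mult_in_columnspace_gen by blast
  have "vec.dim (columns ?B) \<le> vec.dim (range ((*v) ?B))" using vec.dim_subset[OF s1] .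
  moreover have "vec.dim (range ((*v) ?B)) \<le> vec.dim (columns ?B)"
    using vec.dim_subset[OF s2] by simp
  moreover have "(*v) ?B = (\<lambda>x. x v* A)" by (simp add: fun_eq_iff)
  ultimately show ?thesis using r by simp
qed

lemma neg_vm: "x v* (- M) = - (x v* (M::complex^'n^'n))"
  by (simp add: vec_eq_iff vector_matrix_mult_def sum_negf)

lemma rank2: "rank ((A::complex^'n^'n) ** A) = vec.dim ((\<lambda>x. (x v* A) v* A) ` UNIV)"
  unfolding rank_range by (simp add: vector_matrix_mul_assoc)

lemma rank3: "rank ((A::complex^'n^'n) ** A ** A) =
   vec.dim ((\<lambda>x. x v* A) ` (\<lambda>x. (x v* A) v* A) ` UNIV)"
  unfolding rank_range by (simp add: vector_matrix_mul_assoc image_image)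

lemma part1:
  fixes k :: nat and e :: "nat \<Rightarrow> complex^'n^'n"
  assumes ac: "anticommuting k e"
    and rk: "\<forall>i\<in>{1..k}. rank (e i ** e i) = rank (e i ** e i ** e i)"
  shows "(\<Sum>i=1..k. real (rank (e i ** e i))) \<le> (2 * log 2 (real CARD('n)) + 1) * real CARD('n)"
proof -
  define f where "f i x = x v* e i" for i x
  have lf: "\<forall>i\<in>{1..k}. lin (f i)" unfolding f_def using lin_vm by blast
  have acf: "\<forall>i\<in>{1..k}. \<forall>j\<in>{1..k}. i \<noteq> j \<longrightarrow> (\<forall>x. f i (f j x) = - f j (f i x))"
  proof (intro ballI impI allI)
    fix i j x assume i: "i \<in> {1..k}" and j: "j \<in> {1..k}" and ij: "i \<noteq> j"
    have "f i (f j x) = x v* (e j ** e i)"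
      unfolding f_def by (simp add: vector_matrix_mul_assoc)
    also have "\<dots> = x v* (- (e i ** e j))"
      using ac i j ij unfolding anticommuting_def by metis
    also have "\<dots> = - f j (f i x)"
      unfolding neg_vm f_def by (simp add: vector_matrix_mul_assoc)
    finally show "f i (f j x) = - f j (f i x)" .
  qed
  have fit: "\<forall>i\<in>{1..k}. \<forall>x. f i (f i (f i x)) = 0 \<longrightarrow> f i (f i x) = 0"
  proof (intro ballI allI impI)
    fix i x assume i: "i \<in> {1..k}" and z: "f i (f i (f i x)) = 0"
    define R where "R = (\<lambda>x. f i (f i x)) ` UNIV"
    have sR: "vec.subspace R" unfolding R_def f_def
      using sub_vm[OF sub_vm[OF vec.subspace_UNIV]]
      by (simp add: image_image)
    have "vec.dim (f i ` R) = vec.dim R"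
      using rk i unfolding rank2 rank3 R_def f_def by simp
    then have inj: "inj_on (f i) R" using dim_image_inj[of "f i" R] lf i sR by blast
    have "f i (f i x) \<in> R" "0 \<in> R" using vec.subspace_0[OF sR] unfolding R_def by auto
    moreover have "f i 0 = 0" unfolding f_def by simp
    ultimately show "f i (f i x) = 0" using inj z unfolding inj_on_def by metis
  qed
  have "(\<Sum>i\<in>{1..k}. real (vec.dim ((\<lambda>x. f i (f i x)) ` UNIV))) \<le> G (vec.dim (UNIV :: (complex^'n) set))"
    by (rule core[OF _ lf acf fit]) (auto simp: vec.subspace_UNIV)
  moreover have "(\<Sum>i=1..k. real (rank (e i ** e i))) = (\<Sum>i\<in>{1..k}. real (vec.dim ((\<lambda>x. f i (f i x)) ` UNIV)))"
    unfolding rank2 f_def ..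
  ultimately show ?thesis by (simp add: G_def vec_dim_card card_cart_basis)
qed

lemma diag_vec:
  fixes D :: "complex^'n^'n"
  assumes "\<forall>i j. i \<noteq> j \<longrightarrow> D $ i $ j = 0"
  shows "(y v* D) $ j = y $ j * D $ j $ j"
proof -
  have "(y v* D) $ j = (\<Sum>i\<in>UNIV. y $ i * D $ i $ j)"
    unfolding vector_matrix_mult_def by (simp add: mult.commute)
  also have "\<dots> = (\<Sum>i\<in>UNIV. if i = j then y $ j * D $ j $ j else 0)"
    by (rule sum.cong) (use assms in auto)
  finally show ?thesis by simp
qed

lemma diag_pointwise:
  fixes A :: "complex^'n^'n"
  assumes "diagonalizable A" and z: "(x v* A) v* A = 0"
  shows "x v* A = 0"
proof -
  obtain P D :: "complex^'n^'n" where P: "invertible P" and D: "\<forall>i j. i \<noteq> j \<longrightarrow> D $ i $ j = 0"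
    and A: "A = P ** D ** matrix_inv P"
    using assms(1) unfolding diagonalizable_def by blast
  define Q where "Q = matrix_inv P"
  have PQ: "P ** Q = mat 1" "Q ** P = mat 1"
    using P someI_ex[of "\<lambda>A'. P ** A' = mat 1 \<and> A' ** P = mat 1"]
    unfolding invertible_def Q_def matrix_inv_def by auto
  define y where "y = x v* P"
  have AA: "A ** A = P ** D ** D ** Q"
  proof -
    have "A ** A = P ** D ** (Q ** P) ** D ** Q" unfolding A Q_def[symmetric] by (simp add: matrix_mul_assoc)
    then show ?thesis using PQ by (simp add: matrix_mul_rid)
  qed
  have "((y v* D) v* D) v* Q = 0"
    using z unfolding vector_matrix_mul_assoc AA y_def by (simp add: matrix_mul_assoc)
  then have "(((y v* D) v* D) v* Q) v* P = 0" by simp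
  moreover have "D ** D ** Q ** P = D ** D" by (metis PQ(2) matrix_mul_assoc matrix_mul_rid)
  ultimately have w: "(y v* D) v* D = 0"
    by (simp add: vector_matrix_mul_assoc)
  have "y v* D = 0"
  proof (subst vec_eq_iff, intro allI)
    fix j
    have "((y v* D) v* D) $ j = 0" using w by simp
    then have "y $ j * D $ j $ j * D $ j $ j = 0" using diag_vec[OF D] by simp
    then show "(y v* D) $ j = 0 $ j" using diag_vec[OF D] by auto
  qed
  then show ?thesis unfolding A y_def Q_def[symmetric] vector_matrix_mul_assoc[symmetric] by simp
qed

lemma diag_rank:
  fixes A :: "complex^'n^'n"
  assumes "diagonalizable A"
  shows "rank A = rank (A ** A) \<and> rank (A ** A) = rank (A ** A ** A)"
proof -
  define f where "f x = x v* A" for x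
  have lf: "lin f" unfolding f_def using lin_vm .
  have pw: "f (f x) = 0 \<Longrightarrow> f x = 0" for x
    using diag_pointwise[OF assms] unfolding f_def by blast
  have inj: "inj_on f (range f)"
  proof (rule inj_onI)
    fix y z assume "y \<in> range f" "z \<in> range f" "f y = f z"
    then obtain a b where ab: "y = f a" "z = f b" "f (f a) = f (f b)" by auto
    then have "f (f (a - b)) = 0" using vec.linear_diff[OF lf] by simp
    then have "f (a - b) = 0" using pw by blast
    then show "y = z" using ab vec.linear_diff[OF lf] by simp
  qed
  have sR: "vec.subspace (range f)" unfolding f_def using sub_vm[OF vec.subspace_UNIV] .
  have sR2: "vec.subspace ((\<lambda>x. f (f x)) ` UNIV)" unfolding f_def
    using sub_vm[OF sub_vm[OF vec.subspace_UNIV]] by (simp add: image_image)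
  have e1: "vec.dim (f ` range f) = vec.dim (range f)"
    using vec.dim_image_eq[OF lf] inj sR vec.span_eq_iff by metis
  have sub: "(\<lambda>x. f (f x)) ` UNIV \<subseteq> range f" by auto
  have e2: "vec.dim (f ` ((\<lambda>x. f (f x)) ` UNIV)) = vec.dim ((\<lambda>x. f (f x)) ` UNIV)"
    using vec.dim_image_eq[OF lf] inj_on_subset[OF inj sub] sR2 vec.span_eq_iff by metis
  have "rank A = vec.dim (range f)" unfolding f_def by (rule rank_range)
  moreover have "rank (A ** A) = vec.dim ((\<lambda>x. f (f x)) ` UNIV)" unfolding f_def by (rule rank2)
  moreover have "rank (A ** A ** A) = vec.dim (f ` ((\<lambda>x. f (f x)) ` UNIV))" unfolding f_def by (rule rank3)
  moreover have "f ` range f = (\<lambda>x. f (f x)) ` UNIV" by auto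
  ultimately show ?thesis using e1 e2 by simp
qed

theorem mainTheorem5:
  fixes k :: nat and e :: "nat \<Rightarrow> complex^'n^'n"
  assumes "anticommuting k e"
  shows "((\<forall>i\<in>{1..k}. rank (e i ** e i) = rank (e i ** e i ** e i)) \<longrightarrow>
            (\<Sum>i=1..k. real (rank (e i ** e i)))
              \<le> (2 * log 2 (real CARD('n)) + 1) * real CARD('n))
       \<and> ((\<forall>i\<in>{1..k}. diagonalizable (e i)) \<longrightarrow>
            (\<Sum>i=1..k. real (rank (e i)))
              \<le> (2 * log 2 (real CARD('n)) + 1) * real CARD('n))"
proof (intro conjI impI)
  assume "\<forall>i\<in>{1..k}. rank (e i ** e i) = rank (e i ** e i ** e i)"
  then show "(\<Sum>i=1..k. real (rank (e i ** e i))) \<le> (2 * log 2 (real CARD('n)) + 1) * real CARD('n)"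
    using part1[OF assms] by blast
next
  assume d: "\<forall>i\<in>{1..k}. diagonalizable (e i)"
  then have r: "\<forall>i\<in>{1..k}. rank (e i) = rank (e i ** e i) \<and> rank (e i ** e i) = rank (e i ** e i ** e i)"
    using diag_rank by blast
  then have "(\<Sum>i=1..k. real (rank (e i ** e i))) \<le> (2 * log 2 (real CARD('n)) + 1) * real CARD('n)"
    using part1[OF assms] by blast
  moreover have "(\<Sum>i=1..k. real (rank (e i))) = (\<Sum>i=1..k. real (rank (e i ** e i)))"
    using r by (intro sum.cong) auto
  ultimately show "(\<Sum>i=1..k. real (rank (e i))) \<le> (2 * log 2 (real CARD('n)) + 1) * real CARD('n)"
    by simp
qed

end
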